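(* Let $b\ge2$ be an integer, $\gamma\in(0,1)$, and let $\phi$ be a $\mathbb{Z}$-periodic Lipschitz function satisfying condition (H). Then for every $x\in[0,1]$ the measure $m_x$ has no atoms.
   Context: $\Lambda=\{0,\dots,b-1\}$, $\Sigma=\Lambda^{\mathbb{Z}_+}$, $\nu$ uniform on $\Lambda$. $S(x,\mathbf{j})=\sum_{n\ge1}\gamma^{n-1}\phi\big(\frac{x+j_1+j_2b+\cdots+j_nb^{n-1}}{b^n}\big)$ for $\mathbf{j}\in\Sigma$, $x\in[0,1]$. Condition (H): for all $\mathbf{i}\neq\mathbf{j}\in\Sigma$, $x\mapsto S(x,\mathbf{j})-S(x,\mathbf{i})$ is not identically zero on $[0,1]$. $m_x$ is the image of $\nu^{\mathbb{Z}_+}$ under $\mathbf{j}\mapsto S(x,\mathbf{j})$. *)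

theory Defs
  imports "HOL-Probability.Probability"
begin

text \<open>Digit sequences: a sequence j indexed by nat, where j 0 plays the role of j_1.\<close>
definition digit_space :: "nat \<Rightarrow> (nat \<Rightarrow> nat) set" where
  "digit_space b = {j. \<forall>n. j n < b}"

text \<open>S(x,j) = sum_{n>=1} gamma^(n-1) phi((x + j_1 + j_2 b + ... + j_n b^(n-1)) / b^n)\<close>
definition S_fun :: "nat \<Rightarrow> real \<Rightarrow> (real \<Rightarrow> real) \<Rightarrow> real \<Rightarrow> (nat \<Rightarrow> nat) \<Rightarrow> real" where
  "S_fun b \<gamma> \<phi> x j =
     (\<Sum>n. \<gamma> ^ n * \<phi> ((x + (\<Sum>k<Suc n. real (j k) * real b ^ k)) / real b ^ Suc n))"

definition digit_measure :: "nat \<Rightarrow> (nat \<Rightarrow> nat) measure" where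
  "digit_measure b = PiM UNIV (\<lambda>_. measure_pmf (pmf_of_set {..<b}))"

definition m_meas :: "nat \<Rightarrow> real \<Rightarrow> (real \<Rightarrow> real) \<Rightarrow> real \<Rightarrow> real measure" where
  "m_meas b \<gamma> \<phi> x = distr (digit_measure b) borel (S_fun b \<gamma> \<phi> x)"

definition cond_H :: "nat \<Rightarrow> real \<Rightarrow> (real \<Rightarrow> real) \<Rightarrow> bool" where
  "cond_H b \<gamma> \<phi> \<longleftrightarrow> (\<forall>i\<in>digit_space b. \<forall>j\<in>digit_space b. i \<noteq> j \<longrightarrow>
      \<not> (\<forall>x\<in>{0..1}. S_fun b \<gamma> \<phi> x j - S_fun b \<gamma> \<phi> x i = 0))"

end

theory Submission
  imports Defs
begin

lemma space_dm: "space (digit_measure b) = UNIV"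
  by (simp add: digit_measure_def space_PiM)

lemma step_measure:
  assumes b: "b \<ge> 1" and A: "A \<in> sets (digit_measure b)"
  shows "emeasure (digit_measure b) A =
    (\<Sum>a<b. emeasure (digit_measure b) {\<omega>. case_nat a \<omega> \<in> A}) / of_nat b"
proof -
  let ?P = "measure_pmf (pmf_of_set {..<b})"
  interpret S: sequence_space ?P by unfold_locales
  have nu: "digit_measure b = S.S" by (simp add: digit_measure_def)
  have meas: "(\<lambda>(s, \<omega>). case_nat s \<omega>) \<in> measurable (?P \<Otimes>\<^sub>M S.S) S.S"
    by measurable
  have A': "A \<in> sets S.S" using A nu by simp
  have "emeasure S.S A = emeasure (distr (?P \<Otimes>\<^sub>M S.S) S.S (\<lambda>(s, \<omega>). case_nat s \<omega>)) A"
    by (simp add: S.PiM_iter)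
  also have "\<dots> = emeasure (?P \<Otimes>\<^sub>M S.S) ((\<lambda>(s, \<omega>). case_nat s \<omega>) -` A \<inter> space (?P \<Otimes>\<^sub>M S.S))"
    by (rule emeasure_distr[OF meas A'])
  also have "\<dots> = (\<integral>\<^sup>+x. emeasure S.S (Pair x -` ((\<lambda>(s, \<omega>). case_nat s \<omega>) -` A \<inter> space (?P \<Otimes>\<^sub>M S.S))) \<partial>?P)"
    by (rule S.P.emeasure_pair_measure_alt) (use meas A' in measurable)
  also have "\<dots> = (\<integral>\<^sup>+x. emeasure S.S {\<omega>. case_nat x \<omega> \<in> A} \<partial>?P)"
    by (intro nn_integral_cong arg_cong2[where f=emeasure]) (auto simp: space_pair_measure space_PiM)
  also have "\<dots> = (\<Sum>a<b. emeasure S.S {\<omega>. case_nat a \<omega> \<in> A}) / of_nat b"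
    using b by (subst nn_integral_pmf_of_set) (auto simp: lessThan_empty_iff)
  finally show ?thesis using nu by simp
qed


locale setting =
  fixes b :: nat and \<gamma> :: real and \<phi> :: "real \<Rightarrow> real" and L :: real
  assumes b2: "b \<ge> 2" and g0: "0 < \<gamma>" and g1: "\<gamma> < 1"
    and per: "\<forall>t. \<phi> (t + 1) = \<phi> t"
    and lip: "L-lipschitz_on UNIV \<phi>"
begin

abbreviation "S \<equiv> S_fun b \<gamma> \<phi>"
definition "B = \<bar>\<phi> 0\<bar> + L"
definition "R = B / (1 - \<gamma>)"

lemma L0: "L \<ge> 0" using lip by (simp add: lipschitz_on_def)

lemma phi_lip: "\<bar>\<phi> u - \<phi> v\<bar> \<le> L * \<bar>u - v\<bar>"
  using lip by (auto simp: lipschitz_on_def dist_real_def)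

lemma per_nat: "\<phi> (t + real m) = \<phi> t"
proof (induction m arbitrary: t)
  case (Suc m)
  have "\<phi> (t + real (Suc m)) = \<phi> ((t + real m) + 1)" by (simp add: algebra_simps)
  also have "\<dots> = \<phi> t" using per Suc by simp
  finally show ?case .
qed simp

lemma per_int: "\<phi> (t + of_int m) = \<phi> t"
proof (cases "m \<ge> 0")
  case True
  then show ?thesis using per_nat[of t "nat m"] by simp
next
  case False
  have "\<phi> ((t + of_int m) + real (nat (-m))) = \<phi> (t + of_int m)" by (rule per_nat)
  moreover have "(t + of_int m) + real (nat (-m)) = t" using False by simp
  ultimately show ?thesis by simp
qed

lemma phi_bound: "\<bar>\<phi> t\<bar> \<le> B"
proof -
  have "\<phi> t = \<phi> (frac t)"
    using per_int[of "frac t" "\<lfloor>t\<rfloor>"] by (simp add: frac_def)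
  also have "\<bar>\<phi> (frac t)\<bar> \<le> \<bar>\<phi> 0\<bar> + L * \<bar>frac t - 0\<bar>"
    using phi_lip[of "frac t" 0] by linarith
  also have "\<dots> \<le> \<bar>\<phi> 0\<bar> + L"
    using L0 frac_lt_1[of t] frac_ge_0[of t] by (simp add: mult_left_le)
  finally show ?thesis by (simp add: B_def)
qed

lemma B0: "B \<ge> 0" using L0 by (simp add: B_def)

definition "F x j n = \<gamma> ^ n * \<phi> ((x + (\<Sum>k<Suc n. real (j k) * real b ^ k)) / real b ^ Suc n)"

lemma S_eq: "S x j = (\<Sum>n. F x j n)" by (simp add: S_fun_def F_def)

lemma F_bound: "\<bar>F x j n\<bar> \<le> B * \<gamma> ^ n"
  using phi_bound g0 by (simp add: F_def abs_mult mult.commute mult_left_mono)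

lemma geo: "summable (\<lambda>n. B * \<gamma> ^ n)"
  using g0 g1 by (intro summable_mult summable_geometric) simp

lemma F_summable: "summable (F x j)"
  by (rule summable_comparison_test'[OF geo]) (use F_bound in auto)

lemma S_bound: "\<bar>S x j\<bar> \<le> R"
proof -
  have s: "(\<Sum>n. B * \<gamma> ^ n) = R"
    using g0 g1 by (simp add: R_def suminf_geometric suminf_mult divide_simps)
  have fb: "F x j n \<le> B * \<gamma> ^ n" "- F x j n \<le> B * \<gamma> ^ n" for n
    using F_bound[of x j n] by linarith+
  have "S x j \<le> (\<Sum>n. B * \<gamma> ^ n)" unfolding S_eq
    by (rule suminf_le) (use fb F_summable geo in auto)
  moreover have "- S x j \<le> (\<Sum>n. B * \<gamma> ^ n)" unfolding S_eq
    using suminf_minus[OF F_summable, of x j, symmetric]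
    apply simp
    by (rule suminf_le) (use fb F_summable geo summable_minus[OF F_summable] in auto)
  ultimately show ?thesis using s by linarith
qed

lemma S_lip: "\<bar>S x j - S z j\<bar> \<le> L / (1 - \<gamma>) * \<bar>x - z\<bar>"
proof -
  have bnd: "\<bar>F x j n - F z j n\<bar> \<le> (L * \<bar>x - z\<bar>) * \<gamma> ^ n" for n
  proof -
    let ?s = "(\<Sum>k<Suc n. real (j k) * real b ^ k)"
    have "real b \<ge> 1" using b2 by simp
    then have bb: "real b ^ Suc n \<ge> 1" by (rule one_le_power)
    have "\<bar>F x j n - F z j n\<bar> = \<gamma> ^ n * \<bar>\<phi> ((x + ?s) / real b ^ Suc n) - \<phi> ((z + ?s) / real b ^ Suc n)\<bar>"
      using g0 by (simp add: F_def right_diff_distrib[symmetric] abs_mult)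
    also have "\<dots> \<le> \<gamma> ^ n * (L * \<bar>(x + ?s) / real b ^ Suc n - (z + ?s) / real b ^ Suc n\<bar>)"
      using g0 phi_lip by (intro mult_left_mono) auto
    also have "\<bar>(x + ?s) / real b ^ Suc n - (z + ?s) / real b ^ Suc n\<bar> = \<bar>x - z\<bar> / real b ^ Suc n"
      by (simp add: diff_divide_distrib[symmetric])
    also have "\<dots> \<le> \<bar>x - z\<bar>" using bb by (simp add: divide_le_eq mult_le_cancel_left1 order_trans[OF _ mult_right_mono] )
    finally show ?thesis using g0 L0
      by (smt (verit, ccfv_SIG) mult.commute mult_left_mono zero_le_power)
  qed
  have geo2: "summable (\<lambda>n. (L * \<bar>x - z\<bar>) * \<gamma> ^ n)"
    using g0 g1 by (intro summable_mult summable_geometric) simp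
  have sd: "S x j - S z j = (\<Sum>n. F x j n - F z j n)"
    unfolding S_eq by (simp add: suminf_diff[OF F_summable F_summable])
  have sm: "summable (\<lambda>n. F x j n - F z j n)" by (intro summable_diff F_summable)
  have s: "(\<Sum>n. (L * \<bar>x - z\<bar>) * \<gamma> ^ n) = L / (1 - \<gamma>) * \<bar>x - z\<bar>"
    using g0 g1 by (simp add: suminf_geometric suminf_mult divide_simps)
  have "S x j - S z j \<le> (\<Sum>n. (L * \<bar>x - z\<bar>) * \<gamma> ^ n)" unfolding sd
    by (rule suminf_le) (use bnd sm geo2 abs_le_iff in auto)
  moreover have "-(S x j - S z j) \<le> (\<Sum>n. (L * \<bar>x - z\<bar>) * \<gamma> ^ n)" unfolding sd
    using suminf_minus[OF sm, symmetric]
    apply simp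
    by (rule suminf_le) (use bnd geo2 abs_le_iff summable_diff[OF F_summable F_summable] in auto)
  ultimately show ?thesis using s by linarith
qed

lemma S_rec: assumes "a < b"
  shows "S x (case_nat a j) = \<phi> ((x + real a) / real b) + \<gamma> * S ((x + real a) / real b) j"
proof -
  have bpos: "real b > 0" using b2 by simp
  have "F x (case_nat a j) (Suc n) = \<gamma> * F ((x + real a) / real b) j n" for n
  proof -
    have "(\<Sum>k<Suc (Suc n). real (case_nat a j k) * real b ^ k) = real a + real b * (\<Sum>k<Suc n. real (j k) * real b ^ k)"
      by (subst sum.lessThan_Suc_shift) (simp add: sum_distrib_left distrib_left mult_ac)
    then have "(x + (\<Sum>k<Suc (Suc n). real (case_nat a j k) * real b ^ k)) / real b ^ Suc (Suc n)
        = ((x + real a) / real b + (\<Sum>k<Suc n. real (j k) * real b ^ k)) / real b ^ Suc n"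
      using bpos by (simp add: field_simps)
    then show ?thesis by (simp add: F_def)
  qed
  then have "S x (case_nat a j) = F x (case_nat a j) 0 + (\<Sum>n. \<gamma> * F ((x + real a) / real b) j n)"
    unfolding S_eq using suminf_split_head[OF F_summable, of x "case_nat a j"] by simp
  also have "\<dots> = \<phi> ((x + real a) / real b) + \<gamma> * S ((x + real a) / real b) j"
    unfolding S_eq by (subst suminf_mult[OF F_summable]) (simp add: F_def)
  finally show ?thesis .
qed

abbreviation "nu \<equiv> digit_measure b"

lemma space_nu: "space nu = UNIV"
  by (simp add: digit_measure_def space_PiM)

lemma prob_nu: "prob_space nu"
  unfolding digit_measure_def by (rule prob_space_PiM) (simp add: prob_space_measure_pmf)

lemma phi_cont: "continuous_on UNIV \<phi>"
  using lip by (rule lipschitz_on_continuous_on)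

lemma phi_meas[measurable]: "\<phi> \<in> borel_measurable borel"
  using phi_cont by (rule borel_measurable_continuous_onI)

lemma coord_meas[measurable]: "(\<lambda>j. real (j k)) \<in> borel_measurable nu"
proof -
  have "(\<lambda>j. j k) \<in> measurable nu (measure_pmf (pmf_of_set {..<b}))"
    unfolding digit_measure_def by (rule measurable_component_singleton) simp
  moreover have "real \<in> measurable (measure_pmf (pmf_of_set {..<b})) borel" by simp
  ultimately show ?thesis using measurable_comp by (metis (no_types, lifting) comp_apply measurable_cong)
qed

lemma S_meas[measurable]: "S x \<in> borel_measurable nu"
proof -
  have "(\<lambda>j. F x j n) \<in> borel_measurable nu" for n
    unfolding F_def by measurable
  then have "(\<lambda>j. \<Sum>n. F x j n) \<in> borel_measurable nu" by measurable
  then show ?thesis by (simp add: S_eq[abs_def])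
qed

definition "M x y = measure nu {j. S x j = y}"

lemma M_rec: "M x y = (\<Sum>a<b. M ((x + real a) / real b) ((y - \<phi> ((x + real a) / real b)) / \<gamma>)) / real b"
proof -
  interpret P: prob_space nu by (rule prob_nu)
  have A: "{j. S x j = y} \<in> sets nu"
  proof -
    have "{j \<in> space nu. S x j = y} \<in> sets nu" by measurable
    then show ?thesis by (simp add: space_nu)
  qed
  have eq: "{\<omega>. case_nat a \<omega> \<in> {j. S x j = y}} = {\<omega>. S ((x + real a) / real b) \<omega> = (y - \<phi> ((x + real a) / real b)) / \<gamma>}"
    if "a < b" for a
    using S_rec[OF that, of x] g0 by (auto simp: field_simps)
  have "ennreal (M x y) = (\<Sum>a<b. ennreal (M ((x + real a) / real b) ((y - \<phi> ((x + real a) / real b)) / \<gamma>))) / ennreal (real b)"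
    using step_measure[OF _ A] b2 eq unfolding M_def
    by (simp add: P.emeasure_eq_measure ennreal_of_nat_eq_real_of_nat)
  also have "\<dots> = ennreal ((\<Sum>a<b. M ((x + real a) / real b) ((y - \<phi> ((x + real a) / real b)) / \<gamma>)) / real b)"
    using b2 by (simp add: sum_ennreal M_def divide_ennreal sum_nonneg)
  finally show ?thesis
    by (subst (asm) ennreal_inj) (auto simp: M_def sum_nonneg)
qed

lemma M_nonneg: "M x y \<ge> 0" by (simp add: M_def)
lemma M_le1: "M x y \<le> 1"
proof -
  interpret P: prob_space nu by (rule prob_nu)
  show ?thesis by (simp add: M_def)
qed

definition "K = Sup {M x y | x y. x \<in> {0..1}}"

lemma Mset_ne: "{M x y | x y. x \<in> {0..1::real}} \<noteq> {}"
proof -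
  have "M 0 0 \<in> {M x y | x y. x \<in> {0..1::real}}" by fastforce
  then show ?thesis by blast
qed
lemma Mset_bdd: "bdd_above {M x y | x y. x \<in> {0..1::real}}"
  using M_le1 by (auto intro!: bdd_aboveI[of _ 1])

lemma M_le_K: "x \<in> {0..1} \<Longrightarrow> M x y \<le> K"
  unfolding K_def by (rule cSup_upper[OF _ Mset_bdd]) auto

lemma T_in: "x \<in> {0..1} \<Longrightarrow> a < b \<Longrightarrow> (x + real a) / real b \<in> {0..1}"
  using b2 by (auto simp: field_simps)

lemma DS_case: "j \<in> digit_space b \<Longrightarrow> a < b \<Longrightarrow> case_nat a j \<in> digit_space b"
  by (auto simp: digit_space_def split: nat.split)

lemma DS_split: "j \<in> digit_space b \<Longrightarrow> j = case_nat (j 0) (j \<circ> Suc) \<and> j 0 < b \<and> j \<circ> Suc \<in> digit_space b"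
  by (auto simp: digit_space_def fun_eq_iff split: nat.split)

lemma conc:
  assumes "x \<in> {0..1}" "M x y > K * (1 - 1 / real b ^ N)" "j \<in> digit_space b"
  shows "\<bar>S x j - y\<bar> \<le> 2 * R * \<gamma> ^ N"
  using assms
proof (induction N arbitrary: x y j)
  case 0
  then have Mp: "M x y > 0" by simp
  have "{j. S x j = y} \<noteq> {}"
  proof
    assume "{j. S x j = y} = {}"
    then have "M x y = 0" by (simp add: M_def)
    then show False using Mp by simp
  qed
  then obtain j0 where "S x j0 = y" by auto
  then show ?case using S_bound[of x j] S_bound[of x j0] by simp
next
  case (Suc N)
  define T where "T a = (x + real a) / real b" for a
  define c where "c a = M (T a) ((y - \<phi> (T a)) / \<gamma>)" for a
  have bpos: "real b > 0" using b2 by simp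
  have cK: "c a \<le> K" if "a < b" for a using M_le_K T_in[OF Suc.prems(1) that] by (simp add: c_def T_def)
  have sumc: "(\<Sum>a<b. c a) = real b * M x y" using M_rec[of x y] bpos by (simp add: c_def T_def)
  have child: "c a > K * (1 - 1 / real b ^ N)" if "a < b" for a
  proof -
    have "(\<Sum>a<b. c a) = c a + (\<Sum>a'\<in>{..<b} - {a}. c a')"
      using that by (simp add: sum.remove)
    also have "(\<Sum>a'\<in>{..<b} - {a}. c a') \<le> (\<Sum>a'\<in>{..<b} - {a}. K)"
      by (intro sum_mono) (use cK in auto)
    also have "\<dots> = (real b - 1) * K" using that by (simp add: of_nat_diff)
    finally have "real b * M x y \<le> c a + (real b - 1) * K" using sumc by simp
    moreover have "real b * M x y > real b * (K * (1 - 1 / real b ^ Suc N))"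
      using Suc.prems(2) bpos by simp
    moreover have "real b * (K * (1 - 1 / real b ^ Suc N)) = real b * K - K / real b ^ N"
      using bpos by (simp add: field_simps)
    ultimately have "c a > real b * K - K / real b ^ N - (real b - 1) * K" by linarith
    then show ?thesis by (simp add: algebra_simps)
  qed
  obtain a j' where j: "j = case_nat a j'" "a < b" "j' \<in> digit_space b"
    using DS_split[OF Suc.prems(3)] by blast
  have ih: "\<bar>S (T a) j' - (y - \<phi> (T a)) / \<gamma>\<bar> \<le> 2 * R * \<gamma> ^ N"
    using Suc.IH[OF _ _ j(3)] T_in[OF Suc.prems(1) j(2)] child[OF j(2)] by (simp add: c_def T_def)
  have "S x j - y = \<gamma> * (S (T a) j' - (y - \<phi> (T a)) / \<gamma>)"
    using S_rec[OF j(2), of x j'] j(1) g0 by (simp add: T_def field_simps)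
  then have "\<bar>S x j - y\<bar> = \<gamma> * \<bar>S (T a) j' - (y - \<phi> (T a)) / \<gamma>\<bar>"
    using g0 by (simp add: abs_mult)
  also have "\<dots> \<le> \<gamma> * (2 * R * \<gamma> ^ N)" using ih g0 by (simp add: mult_left_mono)
  finally show ?case by (simp add: mult_ac)
qed

definition "osc x e \<longleftrightarrow> (\<forall>i\<in>digit_space b. \<forall>j\<in>digit_space b. \<bar>S x i - S x j\<bar> \<le> e)"

lemma R0: "R \<ge> 0" using B0 g1 by (simp add: R_def)

lemma osc_exists:
  assumes Kp: "K > 0" shows "\<exists>x\<in>{0..1}. osc x (4 * R * \<gamma> ^ N)"
proof -
  have bN: "real b ^ N > 0" using b2 by simp
  have "K * (1 - 1 / real b ^ N) < K" using Kp bN by (simp add: algebra_simps)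
  then have "K * (1 - 1 / real b ^ N) < Sup {M x y | x y. x \<in> {0..1::real}}" by (simp add: K_def)
  then obtain v where "v \<in> {M x y | x y. x \<in> {0..1::real}}" "K * (1 - 1 / real b ^ N) < v"
    using Mset_ne by (rule less_cSupE)
  then obtain x y where xy: "x \<in> {0..1}" "K * (1 - 1 / real b ^ N) < M x y" by auto
  have "osc x (4 * R * \<gamma> ^ N)"
    unfolding osc_def
  proof (intro ballI)
    fix i j assume "i \<in> digit_space b" "j \<in> digit_space b"
    then have "\<bar>S x i - y\<bar> \<le> 2 * R * \<gamma> ^ N" "\<bar>S x j - y\<bar> \<le> 2 * R * \<gamma> ^ N"
      using conc[OF xy] by auto
    then show "\<bar>S x i - S x j\<bar> \<le> 4 * R * \<gamma> ^ N" by linarith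
  qed
  then show ?thesis using xy by blast
qed

lemma osc_step:
  assumes "osc x e" "a < b" shows "osc ((x + real a) / real b) (e / \<gamma>)"
  unfolding osc_def
proof (intro ballI)
  fix i j assume ij: "i \<in> digit_space b" "j \<in> digit_space b"
  let ?T = "(x + real a) / real b"
  have "S x (case_nat a i) - S x (case_nat a j) = \<gamma> * (S ?T i - S ?T j)"
    using S_rec[OF assms(2)] by (simp add: algebra_simps)
  moreover have "\<bar>S x (case_nat a i) - S x (case_nat a j)\<bar> \<le> e"
    using assms(1) DS_case[OF ij(1) assms(2)] DS_case[OF ij(2) assms(2)] by (simp add: osc_def)
  ultimately have "\<gamma> * \<bar>S ?T i - S ?T j\<bar> \<le> e" using g0 by (simp add: abs_mult)
  then show "\<bar>S ?T i - S ?T j\<bar> \<le> e / \<gamma>" using g0 by (simp add: field_simps)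
qed

lemma transport:
  "osc x e \<Longrightarrow> k < b ^ n \<Longrightarrow> osc ((x + real k) / real b ^ n) (e / \<gamma> ^ n)"
proof (induction n arbitrary: x e k)
  case 0
  then show ?case by simp
next
  case (Suc n)
  define a where "a = k mod b"
  define k' where "k' = k div b"
  have bpos: "b > 0" using b2 by simp
  have a: "a < b" using bpos by (simp add: a_def)
  have k': "k' < b ^ n" unfolding k'_def
    using Suc.prems(2) by (simp add: less_mult_imp_div_less mult.commute)
  have kk: "real k = real a + real b * real k'"
  proof -
    have "k = a + b * k'" unfolding a_def k'_def by simp
    then show ?thesis by simp
  qed
  have eq: "(x + real k) / real b ^ Suc n = ((x + real a) / real b + real k') / real b ^ n"
    using bpos by (simp add: kk field_simps)
  have "osc (((x + real a) / real b + real k') / real b ^ n) ((e / \<gamma>) / \<gamma> ^ n)"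
    by (rule Suc.IH[OF osc_step[OF Suc.prems(1) a] k'])
  then show ?case using eq by (simp add: field_simps)
qed

lemma main:
  assumes H: "cond_H b \<gamma> \<phi>" and x: "x \<in> {0..1}"
  shows "M x y = 0"
proof (rule ccontr)
  assume "M x y \<noteq> 0"
  then have "M x y > 0" using M_nonneg[of x y] by simp
  then have Kp: "K > 0" using M_le_K[OF x, of y] by simp
  define i0 :: "nat \<Rightarrow> nat" where "i0 = (\<lambda>_. 0)"
  define j0 :: "nat \<Rightarrow> nat" where "j0 = (\<lambda>_. 0)(0 := 1)"
  have i0: "i0 \<in> digit_space b" using b2 by (simp add: i0_def digit_space_def)
  have j0: "j0 \<in> digit_space b" using b2 by (simp add: j0_def digit_space_def)
  have ne: "i0 \<noteq> j0" by (simp add: i0_def j0_def fun_eq_iff)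
  have "\<not> (\<forall>x\<in>{0..1}. S x j0 - S x i0 = 0)"
    using H i0 j0 ne unfolding cond_H_def by blast
  then obtain z where z: "z \<in> {0..1}" "S z j0 - S z i0 \<noteq> 0" by blast
  define d where "d = \<bar>S z j0 - S z i0\<bar>"
  have dp: "d > 0" using z by (simp add: d_def)
  define C where "C = L / (1 - \<gamma>)"
  have C0: "C \<ge> 0" using L0 g1 by (simp add: C_def)
  have b1: "1 < real b" using b2 by simp
  obtain n where n: "4 * C / d < real b ^ n" using real_arch_pow[OF b1] by blast
  have bn: "real b ^ n > 0" using b2 by simp
  have gn: "\<gamma> ^ n > 0" using g0 by simp
  have "0 < d * \<gamma> ^ n / (8 * R + 8)" using dp gn R0 by simp
  then obtain N where N: "\<gamma> ^ N < d * \<gamma> ^ n / (8 * R + 8)" using real_arch_pow_inv[OF _ g1] by blast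
  obtain x1 where x1: "x1 \<in> {0..1}" "osc x1 (4 * R * \<gamma> ^ N)" using osc_exists[OF Kp] by blast
  define k where "k = (if z = 1 then b ^ n - 1 else nat \<lfloor>z * real b ^ n\<rfloor>)"
  have kb: "k < b ^ n \<and> \<bar>(x1 + real k) / real b ^ n - z\<bar> \<le> 1 / real b ^ n"
  proof (cases "z = 1")
    case True
    have "b ^ n \<ge> 1" using b2 by simp
    then have rk: "real k = real b ^ n - 1" using True by (simp add: k_def of_nat_diff)
    have "\<bar>(x1 + real k) / real b ^ n - z\<bar> = \<bar>x1 - 1\<bar> / real b ^ n"
      using True bn by (simp add: rk field_simps)
    also have "\<dots> \<le> 1 / real b ^ n" using x1(1) bn by (simp add: divide_right_mono)
    finally show ?thesis using True \<open>b ^ n \<ge> 1\<close> by (simp add: k_def)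
  next
    case False
    then have zl: "z < 1" using z(1) by simp
    have fl0: "\<lfloor>z * real b ^ n\<rfloor> \<ge> 0" using z(1) bn by simp
    then have rk: "real k = of_int \<lfloor>z * real b ^ n\<rfloor>" using False by (simp add: k_def)
    have lo: "real k \<le> z * real b ^ n" "z * real b ^ n < real k + 1"
      using rk by linarith+
    have "z * real b ^ n < real b ^ n" using zl bn by simp
    then have "real k < real b ^ n" using lo by linarith
    then have "k < b ^ n" by (metis of_nat_less_iff of_nat_power)
    moreover have "\<bar>(x1 + real k) / real b ^ n - z\<bar> \<le> 1 / real b ^ n"
    proof -
      have "\<bar>x1 + real k - z * real b ^ n\<bar> \<le> 1" using lo x1(1) by auto
      then have "\<bar>(x1 + real k - z * real b ^ n) / real b ^ n\<bar> \<le> 1 / real b ^ n"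
        using bn by (simp add: divide_right_mono)
      moreover have "(x1 + real k - z * real b ^ n) / real b ^ n = (x1 + real k) / real b ^ n - z"
        using bn by (simp add: field_simps)
      ultimately show ?thesis by simp
    qed
    ultimately show ?thesis by simp
  qed
  define p where "p = (x1 + real k) / real b ^ n"
  have op: "osc p (4 * R * \<gamma> ^ N / \<gamma> ^ n)"
    unfolding p_def by (rule transport[OF x1(2)]) (use kb in simp)
  have "4 * R * \<gamma> ^ N \<le> 4 * R * (d * \<gamma> ^ n / (8 * R + 8))"
    using N R0 by (intro mult_left_mono) auto
  also have "\<dots> < d * \<gamma> ^ n / 2"
    using R0 dp gn by (simp add: field_simps)
  finally have "4 * R * \<gamma> ^ N / \<gamma> ^ n < d / 2" using gn by (simp add: field_simps)
  moreover have "\<bar>S p j0 - S p i0\<bar> \<le> 4 * R * \<gamma> ^ N / \<gamma> ^ n"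
    using op i0 j0 unfolding osc_def by blast
  ultimately have Dp: "\<bar>S p j0 - S p i0\<bar> < d / 2" by linarith
  have Cb: "C / real b ^ n < d / 4" using n dp bn by (simp add: field_simps)
  have zp: "\<bar>z - p\<bar> \<le> 1 / real b ^ n" using kb by (simp add: p_def abs_minus_commute)
  have lz: "\<bar>S z j - S p j\<bar> \<le> C / real b ^ n" for j
  proof -
    have "\<bar>S z j - S p j\<bar> \<le> C * \<bar>z - p\<bar>" using S_lip by (simp add: C_def)
    also have "\<dots> \<le> C * (1 / real b ^ n)" using zp C0 by (intro mult_left_mono)
    finally show ?thesis by simp
  qed
  have "d \<le> \<bar>S p j0 - S p i0\<bar> + \<bar>S z j0 - S p j0\<bar> + \<bar>S z i0 - S p i0\<bar>"
    unfolding d_def by linarith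
  also have "\<dots> < d" using Dp lz[of j0] lz[of i0] Cb by linarith
  finally show False by simp
qed

end

theorem lemma5p3:
  fixes b :: nat and \<gamma> :: real and \<phi> :: "real \<Rightarrow> real"
  assumes "b \<ge> 2"
    and "0 < \<gamma>" and "\<gamma> < 1"
    and "\<forall>t. \<phi> (t + 1) = \<phi> t"
    and "\<exists>L. L-lipschitz_on UNIV \<phi>"
    and "cond_H b \<gamma> \<phi>"
  shows "\<forall>x\<in>{0..1}. \<forall>y. emeasure (m_meas b \<gamma> \<phi> x) {y} = 0"
proof (intro ballI allI)
  fix x y :: real assume x: "x \<in> {0..1}"
  obtain L where L: "L-lipschitz_on UNIV \<phi>" using assms(5) by blast
  interpret setting b \<gamma> \<phi> L
    by (rule setting.intro) (use assms L in auto)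
  interpret P: prob_space nu by (rule prob_nu)
  have "emeasure (m_meas b \<gamma> \<phi> x) {y} = emeasure nu (S x -` {y} \<inter> space nu)"
    unfolding m_meas_def by (rule emeasure_distr[OF S_meas]) simp
  also have "S x -` {y} \<inter> space nu = {j. S x j = y}" by (auto simp: space_nu)
  also have "emeasure nu {j. S x j = y} = ennreal (M x y)"
    by (simp add: M_def P.emeasure_eq_measure)
  also have "M x y = 0" by (rule main[OF assms(6) x])
  finally show "emeasure (m_meas b \<gamma> \<phi> x) {y} = 0" by simp
qed

end
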